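(* Let $C$ be a correlator on $E$ with associated metric $(\cdot,\cdot)_C$ and tunneling maps $T_{x,y}$. Let $\mathcal O\subset M$ be a coordinate neighborhood with coordinates $(x^i)_{1\le i\le m}$ and let $\underline e=(e_\alpha)_{1\le\alpha\le r}$ be a $(\cdot,\cdot)_C$-orthonormal frame of $E|_{\mathcal O}$, viewed as a metric isomorphism $\underline{\mathbb R}^r_{\mathcal O}\to E|_{\mathcal O}$. Define $T(\underline e):\mathcal O\times\mathcal O\to\mathrm{End}(\mathbb R^r)$ by $T(\underline e)_{x,y}=\underline e(x)^{-1}T_{x,y}\underline e(y)$. Then for every $i=1,\dots,m$ and every $y\in\mathcal O$ the matrix $\partial_{x^i}T(\underline e)_{x,y}|_{x=y}$ is skew-symmetric.
   Context: $M$ is a smooth manifold of dimension $m$, $E\to M$ a smooth real vector bundle of rank $r$. A correlator on $E$ is a smooth section $C$ of $E\boxtimes E$ (bundle over $M\times M$ with fiber $E_x\otimes E_y$), identified with bilinear maps $C_{x,y}:E_x^*\times E_y^*\to\mathbb R$, which is symmetric ($C_{x,y}(u^*,v^* )=C_{y,x}(v^*,u^* )$) and nonnegative definite; here we assume $C$ is nondegenerate, i.e. each $C_{x,x}$ is positive definite. The correlator metric: $C_{x,x}$ is an inner product on $E_x^*$ and $(\cdot,\cdot)_C$ is the dual inner product on $E_x$. The tunneling map $T_{x,y}\in\mathrm{Hom}(E_y,E_x)$ is defined by $\langle u^*,T_{x,y}v\rangle=C_{x,y}(u^*,v^\flat)$ for $u^*\in E_x^*$, $v\in E_y$, where $v^\flat\in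 E_y^*$ is the metric dual of $v$ with respect to $(\cdot,\cdot)_C$. Then $T_{x,x}=\mathbb 1$ and $T_{y,x}=T_{x,y}^*$. *)

theory Defs
  imports "HOL-Analysis.Analysis"
begin

fun Ck_on :: "nat \<Rightarrow> 'a::real_normed_vector set \<Rightarrow> ('a \<Rightarrow> 'b::real_normed_vector) \<Rightarrow> bool" where
  "Ck_on 0 S f = continuous_on S f"
| "Ck_on (Suc k) S f =
     ((\<forall>x\<in>S. f differentiable (at x)) \<and>
      (\<forall>v. Ck_on k S (\<lambda>x. frechet_derivative f (at x) v)))"

definition smooth_on :: "'a::real_normed_vector set \<Rightarrow> ('a \<Rightarrow> 'b::real_normed_vector) \<Rightarrow> bool" where
  "smooth_on S f \<longleftrightarrow> (\<forall>k. Ck_on k S f)"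

text \<open>Over the coordinate neighbourhood U (an open subset of real^m,
  coordinates = components) the bundle E is trivialised by a smooth reference
  frame f_1..f_r, so E_x = real^r (coefficients w.r.t. f(x)) and
  E_x^* = real^r (coefficients w.r.t. the dual coframe), the pairing being the dot
  product. A correlator is then given by the matrix kernel
  K x y $ a $ b = C_{x,y}(f^a(x), f^b(y)), and the bilinear map is
  C_{x,y}(u, w) = u \<bullet> (K x y *v w).\<close>

definition corr_form :: "('p \<Rightarrow> 'p \<Rightarrow> real^'r^'r) \<Rightarrow> 'p \<Rightarrow> 'p \<Rightarrow> real^'r \<Rightarrow> real^'r \<Rightarrow> real" where
  "corr_form K x y u w = u \<bullet> (K x y *v w)"

definition is_correlator_on :: "'p::real_normed_vector set \<Rightarrow> ('p \<Rightarrow> 'p \<Rightarrow> real^'r^'r) \<Rightarrow> bool" where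
  "is_correlator_on U K \<longleftrightarrow>
     smooth_on (U \<times> U) (\<lambda>z. K (fst z) (snd z)) \<and>
     (\<forall>x\<in>U. \<forall>y\<in>U. \<forall>u w. corr_form K x y u w = corr_form K y x w u) \<and>
     (\<forall>n (xs :: nat \<Rightarrow> 'p) (us :: nat \<Rightarrow> real^'r). (\<forall>k<n. xs k \<in> U) \<longrightarrow>
        0 \<le> (\<Sum>k<n. \<Sum>l<n. corr_form K (xs k) (xs l) (us k) (us l)))"

definition nondegenerate_on :: "'p set \<Rightarrow> ('p \<Rightarrow> 'p \<Rightarrow> real^'r^'r) \<Rightarrow> bool" where
  "nondegenerate_on U K \<longleftrightarrow> (\<forall>x\<in>U. \<forall>u. u \<noteq> 0 \<longrightarrow> 0 < corr_form K x x u u)"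

text \<open>Metric dual (flat) w.r.t. the correlator metric: the correlator metric is the
  inner product on E_x dual to the inner product C_{x,x} on E_x^*; the flat map is
  the inverse of the sharp map u \<mapsto> C_{x,x}(u,-) (i.e. K x x *v u).\<close>
definition corr_flat :: "('p \<Rightarrow> 'p \<Rightarrow> real^'r^'r) \<Rightarrow> 'p \<Rightarrow> real^'r \<Rightarrow> real^'r" where
  "corr_flat K x v = matrix_inv (K x x) *v v"

definition corr_metric :: "('p \<Rightarrow> 'p \<Rightarrow> real^'r^'r) \<Rightarrow> 'p \<Rightarrow> real^'r \<Rightarrow> real^'r \<Rightarrow> real" where
  "corr_metric K x v w = corr_form K x x (corr_flat K x v) (corr_flat K x w)"

definition tunneling :: "('p \<Rightarrow> 'p \<Rightarrow> real^'r^'r) \<Rightarrow> 'p \<Rightarrow> 'p \<Rightarrow> real^'r^'r" where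
  "tunneling K x y = (THE T. \<forall>u v. u \<bullet> (T *v v) = corr_form K x y u (corr_flat K y v))"

text \<open>A local frame e of E|_O, given as the matrix whose column \<alpha> holds the
  coefficients of e_\<alpha>(x); orthonormal for the correlator metric.\<close>
definition orthonormal_frame_on :: "'p::real_normed_vector set \<Rightarrow> ('p \<Rightarrow> 'p \<Rightarrow> real^'r^'r) \<Rightarrow> ('p \<Rightarrow> real^'r^'r) \<Rightarrow> bool" where
  "orthonormal_frame_on U K e \<longleftrightarrow>
     smooth_on U e \<and>
     (\<forall>x\<in>U. invertible (e x) \<and>
        (\<forall>\<alpha> \<beta>. corr_metric K x (column \<alpha> (e x)) (column \<beta> (e x)) = (if \<alpha> = \<beta> then 1 else 0)))"

definition frame_tunneling :: "('p \<Rightarrow> 'p \<Rightarrow> real^'r^'r) \<Rightarrow> ('p \<Rightarrow> real^'r^'r) \<Rightarrow> 'p \<Rightarrow> 'p \<Rightarrow> real^'r^'r" where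
  "frame_tunneling K e x y = matrix_inv (e x) ** tunneling K x y ** e y"

end

theory Submission imports Defs begin

lemma mm_add_r: "((A::real^'n^'m) + B) ** C = A ** C + B ** C"
  by (vector matrix_matrix_mult_def sum.distrib[symmetric] field_simps)

lemma matrix_sub_ldistrib: "(A::real^'n^'m) ** (B - C) = A ** B - A ** C"
  by (vector matrix_matrix_mult_def sum_subtractf[symmetric] field_simps)
lemma matrix_sub_rdistrib: "((A::real^'n^'m) - B) ** C = A ** C - B ** C"
  by (vector matrix_matrix_mult_def sum_subtractf[symmetric] field_simps)

lemma minv: assumes "invertible (A::real^'n^'n)"
  shows "A ** matrix_inv A = mat 1" "matrix_inv A ** A = mat 1"
  using someI_ex[OF assms[unfolded invertible_def]] unfolding matrix_inv_def by auto

lemma det_tendsto: assumes "(f \<longlongrightarrow> (L::real^'n^'n)) F"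
  shows "((\<lambda>x. det (f x)) \<longlongrightarrow> det L) F"
  unfolding det_def
  by (intro tendsto_intros tendsto_vec_nth assms)

lemma minv_cramer: assumes "invertible (B::real^'n^'n)"
  shows "matrix_inv B $ i $ j = det (\<chi> a b. if b = i then axis j 1 $ a else B$a$b) / det B"
proof -
  have d: "det B \<noteq> 0" using assms invertible_det_nz by blast
  have "B *v (matrix_inv B *v axis j 1) = axis j 1"
    by (simp add: matrix_vector_mul_assoc minv[OF assms])
  then have "matrix_inv B *v axis j 1 = (\<chi> k. det(\<chi> a b. if b=k then axis j 1 $a else B$a$b) / det B)"
    using cramer[OF d] by blast
  then have "(matrix_inv B *v axis j 1) $ i = det (\<chi> a b. if b = i then axis j 1 $ a else B$a$b) / det B"
    by simp
  moreover have "(matrix_inv B *v axis j 1) $ i = matrix_inv B $ i $ j"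
    by (simp add: matrix_vector_mult_basis column_def)
  ultimately show ?thesis by simp
qed

lemma minv_tendsto:
  assumes "(A \<longlongrightarrow> (A0::real^'n^'n)) F" "invertible A0" "eventually (\<lambda>x. invertible (A x)) F"
  shows "((\<lambda>x. matrix_inv (A x)) \<longlongrightarrow> matrix_inv A0) F"
proof (intro vec_tendstoI)
  fix i j
  have d: "det A0 \<noteq> 0" using assms invertible_det_nz by blast
  have "((\<lambda>x. det (\<chi> a b. if b = i then axis j 1 $ a else A x$a$b) / det (A x)) \<longlongrightarrow>
        det (\<chi> a b. if b = i then axis j 1 $ a else A0$a$b) / det A0) F"
    by (intro tendsto_divide det_tendsto d vec_tendstoI)
       (auto intro!: tendsto_intros tendsto_vec_nth assms(1))
  then show "((\<lambda>x. matrix_inv (A x) $ i $ j) \<longlongrightarrow> matrix_inv A0 $ i $ j) F"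
    apply (subst minv_cramer[OF assms(2)])
    apply (rule Lim_transform_eventually[rotated])
     apply (rule eventually_mono[OF assms(3)])
     apply (subst minv_cramer, assumption, rule refl)
    apply simp
    done
qed

lemma bb_mm: "bounded_bilinear ((**) :: real^'n^'m \<Rightarrow> real^'p^'n \<Rightarrow> real^'p^'m)"
  unfolding bilinear_conv_bounded_bilinear[symmetric] bilinear_def
  by (auto intro!: linearI simp: matrix_add_ldistrib mm_add_r matrix_scalar_ac scalar_matrix_assoc)

lemma bl_transpose: "bounded_linear (transpose :: real^'n^'m \<Rightarrow> real^'m^'n)"
  unfolding linear_conv_bounded_linear[symmetric]
  by (auto intro!: linearI simp: transpose_def vec_eq_iff)

lemma vd_quot:
  fixes f :: "real \<Rightarrow> 'a::real_normed_vector"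
  shows "(f has_vector_derivative f') (at x) \<longleftrightarrow> ((\<lambda>t. (1/(t-x)) *\<^sub>R (f t - f x)) \<longlongrightarrow> f') (at x)"
proof -
  have eq: "norm ((1 / norm (t - x)) *\<^sub>R (f t - (f x + (t - x) *\<^sub>R f'))) = norm ((1/(t-x)) *\<^sub>R (f t - f x) - f')"
    if "t \<noteq> x" for t
  proof -
    have "(1/(t-x)) *\<^sub>R (f t - (f x + (t - x) *\<^sub>R f')) = (1/(t-x)) *\<^sub>R (f t - f x) - ((1/(t-x)) * (t-x)) *\<^sub>R f'"
      by (metis diff_diff_eq scaleR_diff_right scaleR_scaleR)
    also have "\<dots> = (1/(t-x)) *\<^sub>R (f t - f x) - f'" using that by simp
    finally have "(1/(t-x)) *\<^sub>R (f t - (f x + (t - x) *\<^sub>R f')) = (1/(t-x)) *\<^sub>R (f t - f x) - f'" .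
    moreover have "norm ((1 / norm (t - x)) *\<^sub>R (f t - (f x + (t - x) *\<^sub>R f'))) = norm ((1/(t-x)) *\<^sub>R (f t - (f x + (t - x) *\<^sub>R f')))"
      by simp
    ultimately show ?thesis by simp
  qed
  have "(f has_vector_derivative f') (at x) \<longleftrightarrow>
     ((\<lambda>t. norm ((1 / norm (t - x)) *\<^sub>R (f t - (f x + (t - x) *\<^sub>R f')))) \<longlongrightarrow> 0) (at x)"
    unfolding has_vector_derivative_def has_derivative_at2 tendsto_norm_zero_iff
    by (simp add: bounded_linear_scaleR_left)
  also have "\<dots> \<longleftrightarrow> ((\<lambda>t. norm ((1/(t-x)) *\<^sub>R (f t - f x) - f')) \<longlongrightarrow> 0) (at x)"
    by (rule filterlim_cong[OF refl refl], unfold eventually_at_filter, intro always_eventually allI impI eq)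
  also have "\<dots> \<longleftrightarrow> ((\<lambda>t. (1/(t-x)) *\<^sub>R (f t - f x)) \<longlongrightarrow> f') (at x)"
    by (simp add: tendsto_norm_zero_iff LIM_zero_iff)
  finally show ?thesis .
qed

lemma minv_deriv:
  fixes A :: "real \<Rightarrow> real^'n^'n"
  assumes d: "(A has_vector_derivative A') (at 0)" and i0: "invertible (A 0)"
    and ev: "eventually (\<lambda>t. invertible (A t)) (at 0)"
  shows "((\<lambda>t. matrix_inv (A t)) has_vector_derivative - (matrix_inv (A 0) ** A' ** matrix_inv (A 0))) (at 0)"
proof -
  let ?N = "\<lambda>t. matrix_inv (A t)"
  have "continuous (at 0) A" using d by (rule has_vector_derivative_continuous)
  then have cA: "(A \<longlongrightarrow> A 0) (at 0)" by (simp add: continuous_at)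
  have cN: "(?N \<longlongrightarrow> ?N 0) (at 0)" by (rule minv_tendsto[OF cA i0 ev])
  have q: "((\<lambda>t. (1/(t-0)) *\<^sub>R (A t - A 0)) \<longlongrightarrow> A') (at 0)" using d vd_quot by blast
  have "((\<lambda>t. - (?N t ** ((1/(t-0)) *\<^sub>R (A t - A 0)) ** ?N 0)) \<longlongrightarrow> - (?N 0 ** A' ** ?N 0)) (at 0)"
    by (intro tendsto_minus bounded_bilinear.tendsto[OF bb_mm] cN q tendsto_const)
  moreover have "eventually (\<lambda>t. - (?N t ** ((1/(t-0)) *\<^sub>R (A t - A 0)) ** ?N 0) = (1/(t-0)) *\<^sub>R (?N t - ?N 0)) (at 0)"
  proof (rule eventually_mono[OF ev])
    fix t assume it: "invertible (A t)"
    have e1: "?N t ** (A t - A 0) ** ?N 0 = ?N 0 - ?N t"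
      by (simp add: matrix_sub_ldistrib matrix_sub_rdistrib minv[OF i0] minv[OF it] flip: matrix_mul_assoc)
    have "?N t ** ((1/(t-0)) *\<^sub>R (A t - A 0)) ** ?N 0 = (1/(t-0)) *\<^sub>R (?N t ** (A t - A 0) ** ?N 0)"
      by (simp add: matrix_scalar_ac scalar_matrix_assoc)
    then show "- (?N t ** ((1/(t-0)) *\<^sub>R (A t - A 0)) ** ?N 0) = (1/(t-0)) *\<^sub>R (?N t - ?N 0)"
      by (simp only: e1) (metis minus_diff_eq scaleR_minus_right)
  qed
  ultimately have "((\<lambda>t. (1/(t-0)) *\<^sub>R (?N t - ?N 0)) \<longlongrightarrow> - (?N 0 ** A' ** ?N 0)) (at 0)"
    by (rule Lim_transform_eventually)
  then show ?thesis using vd_quot by blast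
qed


lemma mat_of_forms: assumes "\<And>u w. u \<bullet> ((A::real^'n^'n) *v w) = w \<bullet> (B *v u)"
  shows "A = transpose B"
proof -
  have c: "(M::real^'n^'n) $ i $ j = axis i 1 \<bullet> (M *v axis j 1)" for M i j
    by (simp add: matrix_vector_mult_basis column_def inner_axis')
  show ?thesis
    by (simp add: vec_eq_iff transpose_def c assms)
qed

lemma mat_eq_forms: assumes "\<And>u v. u \<bullet> ((T::real^'n^'n) *v v) = u \<bullet> (T' *v v)"
  shows "T = T'"
proof -
  have "T *v v = T' *v v" for v
  proof -
    have "(T *v v - T' *v v) \<bullet> (T *v v - T' *v v) = 0"
      by (simp add: inner_diff_left inner_diff_right assms)
    then show ?thesis by simp
  qed
  then show ?thesis by (simp add: matrix_eq)
qed

lemma nondeg_inv: assumes "\<And>u. u \<noteq> 0 \<Longrightarrow> 0 < u \<bullet> ((G::real^'n^'n) *v u)"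
  shows "invertible G"
proof -
  have "inj ((*v) G)"
  proof (rule injI)
    fix a b assume "G *v a = G *v b"
    then have "G *v (a - b) = 0" by (simp add: matrix_vector_mult_diff_distrib)
    then show "a = b" using assms[of "a - b"] by fastforce
  qed
  then obtain B where "B ** G = mat 1" using matrix_left_invertible_injective by blast
  then show ?thesis unfolding invertible_def using matrix_left_right_inverse by blast
qed

lemma tunneling_eq:
  assumes "invertible (K y y)"
  shows "tunneling K x y = K x y ** matrix_inv (K y y)"
  unfolding tunneling_def
proof (rule the_equality)
  show "\<forall>u v. u \<bullet> ((K x y ** matrix_inv (K y y)) *v v) = corr_form K x y u (corr_flat K y v)"
    by (simp add: corr_form_def corr_flat_def matrix_vector_mul_assoc)
  fix T assume "\<forall>u v. u \<bullet> (T *v v) = corr_form K x y u (corr_flat K y v)"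
  then show "T = K x y ** matrix_inv (K y y)"
    by (intro mat_eq_forms) (simp add: corr_form_def corr_flat_def matrix_vector_mul_assoc)
qed

lemma frame_facts:
  fixes G E :: "real^'n^'n"
  assumes iG: "invertible G" and iE: "invertible E"
    and on: "\<And>a b. (matrix_inv G *v column a E) \<bullet> (G *v (matrix_inv G *v column b E)) = (if a = b then 1 else 0)"
  shows "matrix_inv G = transpose (matrix_inv E) ** matrix_inv E" "G = E ** transpose E"
proof -
  let ?Gi = "matrix_inv G" and ?Ei = "matrix_inv E"
  have on': "(?Gi *v column a E) \<bullet> column b E = (if a = b then 1 else 0)" for a b
    using on[of a b] by (simp add: matrix_vector_mul_assoc minv[OF iG])
  have M: "transpose E ** ?Gi ** E = mat 1"
  proof -
    have "(transpose E ** ?Gi ** E) $ b $ a = (?Gi *v column a E) \<bullet> column b E" for a b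
      by (simp add: matrix_matrix_mult_def matrix_vector_mult_def column_def inner_vec_def transpose_def
          sum_distrib_left sum_distrib_right mult_ac) (subst sum.swap, simp add: mult_ac)
    then show ?thesis using on' by (simp add: vec_eq_iff mat_def)
  qed
  have tI: "transpose ?Ei ** transpose E = mat 1"
    by (metis matrix_transpose_mul minv(1)[OF iE] transpose_mat)
  have "?Gi = (transpose ?Ei ** transpose E) ** ?Gi ** (E ** ?Ei)"
    by (simp add: tI minv[OF iE])
  also have "\<dots> = transpose ?Ei ** (transpose E ** ?Gi ** E) ** ?Ei"
    by (simp add: matrix_mul_assoc)
  also have "\<dots> = transpose ?Ei ** ?Ei" by (simp add: M)
  finally show gi: "?Gi = transpose ?Ei ** ?Ei" .
  have "E ** transpose E = (G ** ?Gi) ** E ** transpose E" by (simp add: minv[OF iG])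
  also have "\<dots> = G ** transpose ?Ei ** (?Ei ** E) ** transpose E" by (simp add: gi matrix_mul_assoc)
  also have "\<dots> = G ** (transpose ?Ei ** transpose E)" by (simp add: minv[OF iE] matrix_mul_assoc)
  also have "\<dots> = G" by (simp add: tI)
  finally show "G = E ** transpose E" by simp
qed

lemma td: "transpose ((A::real^'n^'m) - B) = transpose A - transpose B"
  by (simp add: transpose_def vec_eq_iff)

lemma mm_neg_l: "(- (A::real^'n^'m)) ** B = - (A ** B)"
  by (simp add: matrix_matrix_mult_def vec_eq_iff sum_negf[symmetric])

lemma alg:
  fixes E0 Ei E' H' P :: "real^'n^'n"
  assumes "E0 ** Ei = mat 1" "Ei ** E0 = mat 1"
    and R: "H' + transpose H' = E0 ** transpose E' + E' ** transpose E0"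
    and P: "P = Ei ** H' ** transpose Ei - Ei ** E'"
  shows "transpose P = - P"
proof -
  have t1: "transpose E0 ** transpose Ei = mat 1"
    by (metis matrix_transpose_mul assms(2) transpose_mat)
  have tP: "transpose P = Ei ** transpose H' ** transpose Ei - transpose E' ** transpose Ei"
    unfolding P
    apply (subst td)+
    apply (simp only: matrix_transpose_mul transpose_transpose matrix_mul_assoc)
    done
  have "P + transpose P = Ei ** (H' + transpose H') ** transpose Ei - Ei ** E' - transpose E' ** transpose Ei"
    by (subst tP, simp add: P matrix_add_ldistrib mm_add_r algebra_simps)
  also have "\<dots> = (Ei ** E0) ** transpose E' ** transpose Ei + Ei ** E' ** (transpose E0 ** transpose Ei)
          - Ei ** E' - transpose E' ** transpose Ei"
    by (simp add: R matrix_add_ldistrib mm_add_r matrix_mul_assoc algebra_simps)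
  also have "\<dots> = 0" by (simp add: assms(2) t1)
  finally show ?thesis by (simp add: eq_neg_iff_add_eq_0 add.commute)
qed


lemma chain0:
  assumes "(p has_vector_derivative p') (at 0)" "f differentiable (at (p 0))"
  shows "((\<lambda>t. f (p t)) has_vector_derivative frechet_derivative f (at (p 0)) p') (at (0::real))"
proof -
  have "(f has_derivative frechet_derivative f (at (p 0))) (at (p 0) within p ` UNIV)"
    using assms(2) frechet_derivative_works has_derivative_at_withinI by blast
  from vector_derivative_diff_chain_within[OF assms(1) this] show ?thesis by (simp add: o_def)
qed

lemma hvd_ev:
  assumes "(f has_vector_derivative f') (at x)" "eventually (\<lambda>t. f t = g t) (nhds x)"
  shows "(g has_vector_derivative f') (at x)"
proof -
  obtain S where "open S" "x \<in> S" "\<forall>t\<in>S. f t = g t" using assms(2) unfolding eventually_nhds by blast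
  then show ?thesis using has_vector_derivative_transform_within_open[OF assms(1)] by blast
qed

lemma smooth_diff: "smooth_on S f \<Longrightarrow> x \<in> S \<Longrightarrow> f differentiable (at x)"
  unfolding smooth_on_def by (metis Ck_on.simps(2))

theorem mainTheorem5:
  fixes U :: "(real^'m) set"
    and K :: "real^'m \<Rightarrow> real^'m \<Rightarrow> real^'r^'r"
    and e :: "real^'m \<Rightarrow> real^'r^'r"
  assumes "open U"
    and "is_correlator_on U K"
    and "nondegenerate_on U K"
    and "orthonormal_frame_on U K e"
  shows "\<forall>i y. y \<in> U \<longrightarrow>
           (\<exists>P. ((\<lambda>t. frame_tunneling K e (y + t *\<^sub>R axis i 1) y) has_vector_derivative P) (at 0)
                \<and> transpose P = - P)"
proof (intro allI impI)
  fix i y assume yU: "y \<in> U"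
  define a :: "real^'m" where "a = axis i 1"
  define x where "x = (\<lambda>t::real. y + t *\<^sub>R a)"
  have x0: "x 0 = y" by (simp add: x_def)
  have xd: "(x has_vector_derivative a) (at t)" for t
    unfolding x_def by (auto intro!: derivative_eq_intros)
  have evU: "eventually (\<lambda>t. x t \<in> U) (nhds 0)"
  proof -
    have "open (x -` U)" using assms(1) by (intro open_vimage) (auto simp: x_def intro!: continuous_intros)
    then show ?thesis unfolding eventually_nhds using x0 yU by (intro exI[of _ "x -` U"]) auto
  qed
  have Ginv: "invertible (K z z)" if "z \<in> U" for z
    using assms(3) that unfolding nondegenerate_on_def corr_form_def by (intro nondeg_inv) auto
  have Einv: "invertible (e z)" if "z \<in> U" for z
    using assms(4) that unfolding orthonormal_frame_on_def by auto
  have ff: "matrix_inv (K z z) = transpose (matrix_inv (e z)) ** matrix_inv (e z) \<and> K z z = e z ** transpose (e z)"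
    if "z \<in> U" for z
  proof -
    have "\<And>a b. (matrix_inv (K z z) *v column a (e z)) \<bullet> (K z z *v (matrix_inv (K z z) *v column b (e z))) = (if a = b then 1 else 0)"
      using assms(4) that unfolding orthonormal_frame_on_def corr_metric_def corr_form_def corr_flat_def by auto
    from frame_facts[OF Ginv[OF that] Einv[OF that] this] show ?thesis by blast
  qed
  have symK: "K z w = transpose (K w z)" if "z \<in> U" "w \<in> U" for z w
    using assms(2) that unfolding is_correlator_on_def corr_form_def by (intro mat_of_forms) auto
  define Kf where "Kf = (\<lambda>z. K (fst z) (snd z))"
  have Kfd: "Kf differentiable (at (y, y))"
    using assms(2) yU unfolding is_correlator_on_def Kf_def by (intro smooth_diff) auto
  define DK where "DK = frechet_derivative Kf (at (y, y))"
  have lDK: "bounded_linear DK"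
    using Kfd unfolding DK_def frechet_derivative_works by (rule has_derivative_bounded_linear)
  have ed: "e differentiable (at y)"
    using assms(4) yU unfolding orthonormal_frame_on_def by (intro smooth_diff) auto
  define Ed where "Ed = frechet_derivative e (at y) a"
  define E0 where "E0 = e y"
  define Ei where "Ei = matrix_inv E0"
  define Gi where "Gi = matrix_inv (K y y)"
  have E0i: "E0 ** Ei = mat 1" "Ei ** E0 = mat 1"
    unfolding Ei_def E0_def using minv[OF Einv[OF yU]] by auto
  have Gif: "Gi = transpose Ei ** Ei" and Gf: "K y y = E0 ** transpose E0"
    using ff[OF yU] unfolding Gi_def Ei_def E0_def by auto
  have GGi: "K y y ** Gi = mat 1" unfolding Gi_def using minv[OF Ginv[OF yU]] by auto
  have dE: "((\<lambda>t. e (x t)) has_vector_derivative Ed) (at 0)"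
    using chain0[OF xd, of e] ed unfolding Ed_def x0 by simp
  have dH: "((\<lambda>t. K (x t) y) has_vector_derivative DK (a, 0)) (at 0)"
  proof -
    have "((\<lambda>t. (x t, y)) has_vector_derivative (a, 0)) (at 0)"
      by (auto intro!: derivative_eq_intros xd)
    from chain0[OF this, of Kf] show ?thesis using Kfd x0 unfolding DK_def Kf_def by simp
  qed
  have dL: "((\<lambda>t. K y (x t)) has_vector_derivative DK (0, a)) (at 0)"
  proof -
    have "((\<lambda>t. (y, x t)) has_vector_derivative (0, a)) (at 0)"
      by (auto intro!: derivative_eq_intros xd)
    from chain0[OF this, of Kf] show ?thesis using Kfd x0 unfolding DK_def Kf_def by simp
  qed
  have dS: "((\<lambda>t. K (x t) (x t)) has_vector_derivative DK (a, a)) (at 0)"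
  proof -
    have "((\<lambda>t. (x t, x t)) has_vector_derivative (a, a)) (at 0)"
      by (auto intro!: derivative_eq_intros xd)
    from chain0[OF this, of Kf] show ?thesis using Kfd x0 unfolding DK_def Kf_def by simp
  qed
  have Ld: "DK (0, a) = transpose (DK (a, 0))"
  proof -
    have "((\<lambda>t. transpose (K (x t) y)) has_vector_derivative transpose (DK (a, 0))) (at 0)"
      by (rule bounded_linear.has_vector_derivative[OF bl_transpose dH])
    then have "((\<lambda>t. K y (x t)) has_vector_derivative transpose (DK (a, 0))) (at 0)"
    proof (rule hvd_ev)
      show "eventually (\<lambda>t. transpose (K (x t) y) = K y (x t)) (nhds 0)"
        using evU by (rule eventually_mono) (simp add: symK[OF yU])
    qed
    with dL show ?thesis using vector_derivative_unique_at by blast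
  qed
  have Sd1: "DK (a, a) = DK (a, 0) + DK (0, a)"
    using bounded_linear.linear[OF lDK] by (metis add.right_neutral add_0 add_Pair linear_add)
  have Sd2: "DK (a, a) = E0 ** transpose Ed + Ed ** transpose E0"
  proof -
    have "((\<lambda>t. e (x t) ** transpose (e (x t))) has_vector_derivative
            e (x 0) ** transpose Ed + Ed ** transpose (e (x 0))) (at 0)"
      by (intro bounded_bilinear.has_vector_derivative[OF bb_mm] dE
            bounded_linear.has_vector_derivative[OF bl_transpose])
    then have "((\<lambda>t. K (x t) (x t)) has_vector_derivative E0 ** transpose Ed + Ed ** transpose E0) (at 0)"
      unfolding x0 E0_def
    proof (rule hvd_ev)
      show "eventually (\<lambda>t. e (x t) ** transpose (e (x t)) = K (x t) (x t)) (nhds 0)"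
        using evU by (rule eventually_mono) (simp add: ff)
    qed
    with dS show ?thesis using vector_derivative_unique_at by blast
  qed
  have R: "DK (a, 0) + transpose (DK (a, 0)) = E0 ** transpose Ed + Ed ** transpose E0"
    using Sd1 Sd2 Ld by simp
  have dN: "((\<lambda>t. matrix_inv (e (x t))) has_vector_derivative - (Ei ** Ed ** Ei)) (at 0)"
  proof -
    have "eventually (\<lambda>t. invertible (e (x t))) (at 0)"
      using evU unfolding eventually_nhds_conv_at by (auto elim: eventually_mono intro: Einv)
    from minv_deriv[OF dE _ this] show ?thesis using Einv[OF yU] unfolding x0 Ei_def E0_def by simp
  qed
  have FT: "frame_tunneling K e (x t) y = matrix_inv (e (x t)) ** (K (x t) y ** Gi) ** E0" for t
    unfolding frame_tunneling_def Gi_def E0_def tunneling_eq[where K=K and y=y, OF Ginv[OF yU]] ..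
  define P where "P = (Ei ** (K y y ** Gi)) ** 0 + (Ei ** (K y y ** 0 + DK (a, 0) ** Gi)
                      + - (Ei ** Ed ** Ei) ** (K y y ** Gi)) ** E0"
  have dF: "((\<lambda>t. frame_tunneling K e (x t) y) has_vector_derivative P) (at 0)"
  proof -
    have "((\<lambda>t. matrix_inv (e (x t)) ** (K (x t) y ** Gi) ** E0) has_vector_derivative P) (at 0)"
      unfolding P_def
      using bounded_bilinear.has_vector_derivative[OF bb_mm
              bounded_bilinear.has_vector_derivative[OF bb_mm dN
                bounded_bilinear.has_vector_derivative[OF bb_mm dH has_vector_derivative_const[of Gi]]]
              has_vector_derivative_const[of E0]]
      by (simp add: x0 Ei_def E0_def)
    then show ?thesis unfolding FT .
  qed
  have GiE: "Gi ** E0 = transpose Ei"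
    by (simp add: Gif flip: matrix_mul_assoc) (simp add: E0i)
  have P2: "P = Ei ** DK (a, 0) ** transpose Ei - Ei ** Ed"
  proof -
    have "P = Ei ** DK (a, 0) ** (Gi ** E0) - Ei ** Ed ** (Ei ** (K y y ** Gi) ** E0)"
      unfolding P_def by (simp add: mm_add_r matrix_add_ldistrib matrix_mul_assoc mm_neg_l matrix_sub_rdistrib)
    also have "\<dots> = Ei ** DK (a, 0) ** transpose Ei - Ei ** Ed"
      by (simp add: GiE GGi E0i)
    finally show ?thesis .
  qed
  have "transpose P = - P" by (rule alg[OF E0i R P2])
  with dF show "\<exists>P. ((\<lambda>t. frame_tunneling K e (y + t *\<^sub>R axis i 1) y) has_vector_derivative P) (at 0)
                \<and> transpose P = - P"
    unfolding x_def a_def by blast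
qed

end
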